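(* Let $S_0$ be a nonempty set and let $\mathcal{G}$ be a group acting simply transitively on $S_0$ (for every $x,y \in S_0$ there is a unique $T \in \mathcal{G}$ with $Tx = y$). Let $S$ be a collection of subsets of $S_0$, partially ordered by set inclusion, and extend the action of $\mathcal{G}$ to subsets by $Ta = \{Tx : x \in a\}$ (assume $S$ is closed under this action). Suppose every $a \in S$ has the fixed point property with respect to $\mathcal{G}$: for all $T \in \mathcal{G}$, $Ta \subseteq a$ implies there exists $x \in a$ with $Tx = x$. Then on the set $S/\mathcal{G}$ of orbits, the strong relation ($A \preceq B$ iff for all $a \in A$ there is $b \in B$ with $a \subseteq b$) and the weak relation ($A \preceq B$ iff there exist $a \in A$, $b \in B$ with $a \subseteq b$) are identical, and this relation is a partial order on $S/\mathcal{G}$. *)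

theory Defs
  imports "HOL-Algebra.Group_Action"
begin

definition set_orbit :: "('g, 'm) monoid_scheme \<Rightarrow> ('g \<Rightarrow> 'b \<Rightarrow> 'b) \<Rightarrow> 'b set \<Rightarrow> 'b set set" where
  "set_orbit G \<phi> a = {\<phi> T ` a | T. T \<in> carrier G}"

definition set_orbits :: "('g, 'm) monoid_scheme \<Rightarrow> ('g \<Rightarrow> 'b \<Rightarrow> 'b) \<Rightarrow> 'b set set \<Rightarrow> 'b set set set" where
  "set_orbits G \<phi> S = set_orbit G \<phi> ` S"

definition strong_le :: "'b set set \<Rightarrow> 'b set set \<Rightarrow> bool" where
  "strong_le A B \<longleftrightarrow> (\<forall>a\<in>A. \<exists>b\<in>B. a \<subseteq> b)"

definition weak_le :: "'b set set \<Rightarrow> 'b set set \<Rightarrow> bool" where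
  "weak_le A B \<longleftrightarrow> (\<exists>a\<in>A. \<exists>b\<in>B. a \<subseteq> b)"

end

theory Submission
  imports Defs
begin

context group_action
begin

lemma one_img: "a \<subseteq> E \<Longrightarrow> \<phi> \<one> ` a = a"
proof -
  assume "a \<subseteq> E"
  have "\<And>x. x \<in> E \<Longrightarrow> \<phi> \<one> x = x" using id_eq_one by (metis restrict_apply')
  then show ?thesis using \<open>a \<subseteq> E\<close> by (simp add: subset_eq image_def)
qed

lemma comp_img: "a \<subseteq> E \<Longrightarrow> g \<in> carrier G \<Longrightarrow> h \<in> carrier G \<Longrightarrow> \<phi> (g \<otimes> h) ` a = \<phi> g ` (\<phi> h ` a)"
  using composition_rule by (auto simp: image_image subset_iff intro!: image_cong)

lemma img_sub: "a \<subseteq> E \<Longrightarrow> g \<in> carrier G \<Longrightarrow> \<phi> g ` a \<subseteq> E"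
  using surj_prop by blast

end

theorem corollary2:
  fixes G (structure) and S0 :: "'b set" and \<phi> :: "'g \<Rightarrow> 'b \<Rightarrow> 'b" and S :: "'b set set"
  assumes "group_action G S0 \<phi>"
    and "S0 \<noteq> {}"
    and "\<forall>x\<in>S0. \<forall>y\<in>S0. \<exists>!T. T \<in> carrier G \<and> \<phi> T x = y"
    and "\<forall>a\<in>S. a \<subseteq> S0"
    and "\<forall>T\<in>carrier G. \<forall>a\<in>S. \<phi> T ` a \<in> S"
    and "\<forall>a\<in>S. \<forall>T\<in>carrier G. \<phi> T ` a \<subseteq> a \<longrightarrow> (\<exists>x\<in>a. \<phi> T x = x)"
  shows "(\<forall>A\<in>set_orbits G \<phi> S. \<forall>B\<in>set_orbits G \<phi> S. strong_le A B \<longleftrightarrow> weak_le A B)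
         \<and> partial_order_on (set_orbits G \<phi> S)
             {(A, B). A \<in> set_orbits G \<phi> S \<and> B \<in> set_orbits G \<phi> S \<and> strong_le A B}"
proof -
  interpret ga: group_action G S0 \<phi> by fact
  have grp: "group G" using ga.group_hom group_hom.axioms(1) by blast
  interpret group G by (rule grp)
  note sub = assms(4)
  have self: "a \<in> set_orbit G \<phi> a" if "a \<in> S" for a
  proof -
    have "\<phi> \<one> ` a = a" using ga.one_img[of a] sub that by blast
    then show ?thesis unfolding set_orbit_def by (metis (mono_tags, lifting) mem_Collect_eq one_closed)
  qed
  have sw: "strong_le A B \<longleftrightarrow> weak_le A B" if h: "a \<in> S" "b \<in> S" "A = set_orbit G \<phi> a" "B = set_orbit G \<phi> b" for A B a b
  proof
    assume "strong_le A B" then show "weak_le A B"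
      using self[OF h(1)] h(3) unfolding strong_le_def weak_le_def by blast
  next
    assume "weak_le A B"
    then obtain T U where T: "T \<in> carrier G" and U: "U \<in> carrier G" and le: "\<phi> T ` a \<subseteq> \<phi> U ` b"
      using h(3,4) unfolding weak_le_def set_orbit_def by blast
    show "strong_le A B" unfolding strong_le_def
    proof
      fix a' assume "a' \<in> A"
      then obtain T' where T': "T' \<in> carrier G" and a': "a' = \<phi> T' ` a"
        using h(3) unfolding set_orbit_def by blast
      define g where "g = T' \<otimes> inv T"
      have g: "g \<in> carrier G" using T T' g_def by simp
      have "g \<otimes> T = T'" using T T' g_def by (simp add: m_assoc)
      then have "a' = \<phi> g ` (\<phi> T ` a)" using a' ga.comp_img[of a g T] sub h(1) g T by simp
      also have "\<dots> \<subseteq> \<phi> g ` (\<phi> U ` b)" using le by blast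
      also have "\<dots> = \<phi> (g \<otimes> U) ` b" using ga.comp_img[of b g U] sub h(2) g U by simp
      finally show "\<exists>b'\<in>B. a' \<subseteq> b'" using h(4) g U unfolding set_orbit_def by blast
    qed
  qed
  have part1: "\<forall>A\<in>set_orbits G \<phi> S. \<forall>B\<in>set_orbits G \<phi> S. strong_le A B \<longleftrightarrow> weak_le A B"
    unfolding set_orbits_def using sw by blast
  define R where "R = {(A, B). A \<in> set_orbits G \<phi> S \<and> B \<in> set_orbits G \<phi> S \<and> strong_le A B}"
  have refl: "refl_on (set_orbits G \<phi> S) R" unfolding R_def refl_on_def strong_le_def by blast
  have trans: "trans R" unfolding R_def trans_def strong_le_def by (auto, meson order_trans)
  have antisym: "antisym R"
  proof (rule antisymI)
    fix A B assume AB: "(A, B) \<in> R" and BA: "(B, A) \<in> R"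
    then obtain a b where a: "a \<in> S" "A = set_orbit G \<phi> a" and b: "b \<in> S" "B = set_orbit G \<phi> b"
      unfolding R_def set_orbits_def by blast
    have sAB: "strong_le A B" and sBA: "strong_le B A" using AB BA R_def by auto
    obtain U where U: "U \<in> carrier G" and aU: "a \<subseteq> \<phi> U ` b"
      using sAB self[OF a(1)] a(2) b(2) unfolding strong_le_def set_orbit_def by blast
    have "\<phi> U ` b \<in> B" using U b(2) unfolding set_orbit_def by blast
    then obtain V where V: "V \<in> carrier G" and bV: "\<phi> U ` b \<subseteq> \<phi> V ` a"
      using sBA a(2) unfolding strong_le_def set_orbit_def by blast
    have aE: "a \<subseteq> S0" and bE: "b \<subseteq> S0" using sub a(1) b(1) by auto
    have "\<phi> (inv V) ` a \<subseteq> \<phi> (inv V) ` (\<phi> V ` a)" using aU bV by blast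
    also have "\<dots> = \<phi> (inv V \<otimes> V) ` a" using ga.comp_img[of a "inv V" V] aE V by simp
    also have "\<dots> = a" using V ga.one_img[OF aE] by simp
    finally obtain x where x: "x \<in> a" "\<phi> (inv V) x = x" using assms(6) a(1) V by blast
    have xE: "x \<in> S0" using x aE by blast
    have "\<phi> \<one> x = x" using ga.one_img[of "{x}"] xE by simp
    then have "inv V = \<one>" using assms(3) xE x(2) V by (metis inv_closed one_closed)
    then have V1: "V = \<one>" using V by (metis inv_inv one_closed inv_one)
    have eq: "a = \<phi> U ` b" using aU bV V1 ga.one_img[OF aE] by blast
    show "A = B"
    proof
      show "A \<subseteq> B"
      proof
        fix c assume "c \<in> A"
        then obtain T where T: "T \<in> carrier G" "c = \<phi> T ` a" using a(2) unfolding set_orbit_def by blast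
        then have "c = \<phi> (T \<otimes> U) ` b" using eq ga.comp_img[OF bE T(1) U] by simp
        then show "c \<in> B" using b(2) T U unfolding set_orbit_def by blast
      qed
    next
      show "B \<subseteq> A"
      proof
        fix c assume "c \<in> B"
        then obtain T where T: "T \<in> carrier G" "c = \<phi> T ` b" using b(2) unfolding set_orbit_def by blast
        have "\<phi> (T \<otimes> inv U) ` a = \<phi> T ` (\<phi> (inv U) ` (\<phi> U ` b))"
          using eq ga.comp_img[OF aE T(1)] U by simp
        also have "\<dots> = \<phi> T ` (\<phi> (inv U \<otimes> U) ` b)" using ga.comp_img[OF bE, of "inv U" U] U by simp
        also have "\<dots> = c" using U T ga.one_img[OF bE] by simp
        finally show "c \<in> A" using a(2) T U unfolding set_orbit_def by blast
      qed
    qed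
  qed
  have "R \<subseteq> set_orbits G \<phi> S \<times> set_orbits G \<phi> S" unfolding R_def by blast
  then have "partial_order_on (set_orbits G \<phi> S) R"
    using refl trans antisym unfolding partial_order_on_def preorder_on_def by blast
  then show ?thesis using part1 R_def by simp
qed

end
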